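(* For every fixed $\beta>0$, the function $\lambda\mapsto UB(\beta,\lambda)$ is strictly decreasing on $(0,\infty)$.
   Context: $\phi$ and $\Phi$ denote the standard normal density and distribution function. For $\lambda>0$ and $\beta\ge 0$ set $n=\lambda+\beta\sqrt{\lambda}$, $\rho=\lambda/n$, $a=\sqrt{-2n(1-\rho+\ln\rho)}$ (note $1-\rho+\ln\rho\le 0$), and $\gamma=(n-\lambda)/\sqrt{n}=\beta\sqrt{\rho}$. Define $UB(\beta,\lambda)=\left[\rho+\gamma\left(\frac{\Phi(a)}{\phi(a)}+\frac{2}{3\sqrt{n}}\right)\right]^{-1}$. *)

theory Defs
  imports "HOL-Probability.Probability"
begin

definition std_normal_cdf :: "real \<Rightarrow> real" where
  "std_normal_cdf x = (LBINT t:{..x}. std_normal_density t)"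

definition UB :: "real \<Rightarrow> real \<Rightarrow> real" where
  "UB \<beta> lam =
    (let n = lam + \<beta> * sqrt lam;
         \<rho> = lam / n;
         a = sqrt (- 2 * n * (1 - \<rho> + ln \<rho>));
         \<gamma> = (n - lam) / sqrt n
     in inverse (\<rho> + \<gamma> * (std_normal_cdf a / std_normal_density a + 2 / (3 * sqrt n))))"

end

theory Submission imports Defs begin

lemma int_phi: "integrable lborel std_normal_density"
  using integrable_std_normal_moment[of 0] by simp

lemma cdf_nonneg: "0 \<le> std_normal_cdf x"
  unfolding std_normal_cdf_def set_lebesgue_integral_def
  by (rule integral_nonneg_AE) (auto simp: indicator_def)

lemma cdf_mono: assumes "x \<le> y" shows "std_normal_cdf x \<le> std_normal_cdf y"
  unfolding std_normal_cdf_def set_lebesgue_integral_def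
proof (rule integral_mono)
  show "integrable lborel (\<lambda>t. indicat_real {..x} t *\<^sub>R std_normal_density t)"
    using int_phi by (intro integrable_mult_indicator) auto
  show "integrable lborel (\<lambda>t. indicat_real {..y} t *\<^sub>R std_normal_density t)"
    using int_phi by (intro integrable_mult_indicator) auto
  fix t show "indicat_real {..x} t *\<^sub>R std_normal_density t \<le> indicat_real {..y} t *\<^sub>R std_normal_density t"
    using assms by (auto simp: indicator_def)
qed

lemma phi_pos: "0 < std_normal_density x" by (rule normal_density_pos) simp

lemma phi_anti: assumes "0 \<le> x" "x \<le> y" shows "std_normal_density y \<le> std_normal_density x"
proof -
  have "x^2 \<le> y^2" using assms by (intro power_mono) auto
  then show ?thesis unfolding std_normal_density_def by (simp add: divide_right_mono)
qed

lemma M_mono: assumes "0 \<le> x" "x \<le> y"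
  shows "std_normal_cdf x / std_normal_density x \<le> std_normal_cdf y / std_normal_density y"
proof -
  have "std_normal_cdf x / std_normal_density x \<le> std_normal_cdf y / std_normal_density x"
    using cdf_mono[OF assms(2)] phi_pos[of x] by (simp add: divide_right_mono)
  also have "\<dots> \<le> std_normal_cdf y / std_normal_density y"
    using phi_anti[OF assms] phi_pos[of y] cdf_nonneg[of y] by (intro divide_left_mono) auto
  finally show ?thesis .
qed

lemma ln_ineq: fixes s :: real assumes "1 \<le> s" shows "2*(s-1)/(s+1) \<le> ln s"
proof -
  let ?H = "\<lambda>s. ln s - 2*(s-1)/(s+1)"
  have "?H 1 \<le> ?H s"
  proof (rule DERIV_nonneg_imp_nondecreasing[OF assms])
    fix x :: real assume x: "1 \<le> x" "x \<le> s"
    have "DERIV ?H x :> 1/x - (2*(x+1) - 2*(x-1)*1)/(x+1)^2"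
      using x by (auto intro!: derivative_eq_intros simp: power2_eq_square)
    moreover have "1/x - (2*(x+1) - 2*(x-1)*1)/(x+1)^2 \<ge> 0"
    proof -
      have "(x-1)^2 \<ge> 0" by simp
      then have "4*x \<le> (x+1)^2" by (simp add: power2_eq_square algebra_simps)
      then have "4/(x+1)^2 \<le> 1/x" using x by (simp add: divide_simps)
      then show ?thesis by simp
    qed
    ultimately show "\<exists>y. DERIV ?H x :> y \<and> y \<ge> 0" by auto
  qed
  then show ?thesis by simp
qed

definition G :: "real \<Rightarrow> real \<Rightarrow> real" where
  "G b t = t*(t+b)*(ln (t+b) - ln t) - b*t"

lemma G_nonneg: assumes "0 < t" "0 < b" shows "0 \<le> G b t"
proof -
  have s1: "1 \<le> (t+b)/t" using assms by simp
  have "2*((t+b)/t-1)/((t+b)/t+1) \<le> ln ((t+b)/t)" by (rule ln_ineq[OF s1])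
  moreover have "2*((t+b)/t-1)/((t+b)/t+1) = 2*b/(2*t+b)" using assms by (simp add: field_simps)
  moreover have "b/(t+b) \<le> 2*b/(2*t+b)" using assms by (simp add: field_simps)
  moreover have "ln ((t+b)/t) = ln (t+b) - ln t" using assms by (simp add: ln_div)
  ultimately have "b/(t+b) \<le> ln (t+b) - ln t" by linarith
  then have "t*(t+b)*(b/(t+b)) \<le> t*(t+b)*(ln (t+b) - ln t)" using assms by (intro mult_left_mono) auto
  then show ?thesis using assms unfolding G_def by simp
qed

lemma G_mono: assumes "0 < t1" "t1 \<le> t2" "0 < b" shows "G b t1 \<le> G b t2"
proof (rule DERIV_nonneg_imp_nondecreasing[OF assms(2)])
  fix x :: real assume x: "t1 \<le> x" "x \<le> t2"
  then have xp: "0 < x" using assms by simp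
  have "DERIV (G b) x :> (1*(x+b) + x*1)*(ln (x+b) - ln x) + x*(x+b)*(1/(x+b) - 1/x) - b"
    unfolding G_def[abs_def] using xp assms
    by (auto intro!: derivative_eq_intros)
  moreover have "(1*(x+b) + x*1)*(ln (x+b) - ln x) + x*(x+b)*(1/(x+b) - 1/x) - b
     = (2*x+b)*(ln (x+b) - ln x) - 2*b"
  proof -
    have "x \<noteq> 0" "x+b \<noteq> 0" using xp assms by auto
    then have "x*(x+b)*(1/(x+b) - 1/x) = -b" by (simp add: right_diff_distrib)
    then show ?thesis by (simp add: algebra_simps)
  qed
  moreover have "(2*x+b)*(ln (x+b) - ln x) - 2*b \<ge> 0"
  proof -
    have s1: "1 \<le> (x+b)/x" using xp assms by simp
    have "2*((x+b)/x-1)/((x+b)/x+1) \<le> ln ((x+b)/x)" by (rule ln_ineq[OF s1])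
    moreover have "2*((x+b)/x-1)/((x+b)/x+1) = 2*b/(2*x+b)" using xp assms by (simp add: field_simps)
    moreover have "ln ((x+b)/x) = ln (x+b) - ln x" using xp assms by (simp add: ln_div)
    ultimately have "2*b/(2*x+b) \<le> ln (x+b) - ln x" by linarith
    then have "(2*x+b)*(2*b/(2*x+b)) \<le> (2*x+b)*(ln (x+b) - ln x)" using xp assms by (intro mult_left_mono) auto
    then show ?thesis using xp assms by simp
  qed
  ultimately show "\<exists>y. DERIV (G b) x :> y \<and> y \<ge> 0" by auto
qed

definition M :: "real \<Rightarrow> real" where "M x = std_normal_cdf x / std_normal_density x"

definition Dt :: "real \<Rightarrow> real \<Rightarrow> real" where
  "Dt b t = 1 - b/(3*(t+b)) + b * sqrt(t/(t+b)) * M (sqrt (2 * G b t))"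

lemma UB_eq: assumes b: "0 < b" and l: "0 < l" shows "UB b l = inverse (Dt b (sqrt l))"
proof -
  define t where "t = sqrt l"
  have t: "0 < t" using l by (simp add: t_def)
  have lt: "l = t^2" using l by (simp add: t_def)
  have tb: "0 < t + b" using t b by simp
  have h1: "l + b * sqrt l = t*(t+b)" using lt by (simp add: t_def power2_eq_square algebra_simps)
  have h2: "l / (t*(t+b)) = t/(t+b)" using lt t by (simp add: power2_eq_square)
  have h3: "- 2 * (t*(t+b)) * (1 - t/(t+b) + ln (t/(t+b))) = 2 * G b t"
  proof -
    have "1 - t/(t+b) = b/(t+b)" using tb by (simp add: field_simps)
    moreover have "ln (t/(t+b)) = ln t - ln (t+b)" using t tb by (simp add: ln_div)
    moreover have "t*(t+b)*(b/(t+b)) = b*t" using tb by simp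
    ultimately have "1 - t/(t+b) + ln (t/(t+b)) = b/(t+b) + (ln t - ln (t+b))"
      and e: "t*(t+b)*(b/(t+b)) = b*t" by auto
    then have "- 2 * (t*(t+b)) * (1 - t/(t+b) + ln (t/(t+b)))
       = -2*(t*(t+b)*(b/(t+b))) - 2*(t*(t+b))*(ln t - ln (t+b))"
      by (simp only: ring_distribs) 
    also have "\<dots> = -2*(b*t) - 2*(t*(t+b))*(ln t - ln (t+b))" by (simp only: e)
    finally show ?thesis unfolding G_def by (simp add: algebra_simps)
  qed
  have sq: "sqrt (t*(t+b)) = sqrt t * sqrt (t+b)" by (simp add: real_sqrt_mult)
  have sqt: "sqrt t * sqrt t = t" using t by simp
  have sqtb: "sqrt (t+b) * sqrt (t+b) = t+b" using tb by simp
  have sqd: "sqrt (t/(t+b)) = sqrt t / sqrt (t+b)" by (simp add: real_sqrt_divide)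
  have stp: "0 < sqrt t" "0 < sqrt (t+b)" using t tb by auto
  have h4: "(t*(t+b) - l) / sqrt (t*(t+b)) = b * sqrt(t/(t+b))"
  proof -
    have "t*(t+b) - l = b * (sqrt t * sqrt t)" using lt sqt by (simp add: power2_eq_square algebra_simps)
    then show ?thesis unfolding sq sqd using stp by (simp add: field_simps)
  qed
  have h5: "b * sqrt(t/(t+b)) * (2/(3* sqrt (t*(t+b)))) = 2*b/(3*(t+b))"
  proof -
    have "b * (sqrt t / sqrt (t+b)) * (2/(3*(sqrt t * sqrt (t+b)))) = (2*b) * sqrt t /(3*(sqrt (t+b) * sqrt (t+b)) * sqrt t)"
      by (simp add: field_simps)
    also have "\<dots> = 2*b/(3*(t+b))" using stp unfolding sqtb by simp
    finally show ?thesis unfolding sq sqd .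
  qed
  have h6: "t/(t+b) + 2*b/(3*(t+b)) = 1 - b/(3*(t+b))"
  proof -
    have "t/(t+b) = 3*t/(3*(t+b))" by (simp only: mult_divide_mult_cancel_left_if) simp
    then have "t/(t+b) + 2*b/(3*(t+b)) = (3*t + 2*b)/(3*(t+b))" by (simp add: add_divide_distrib)
    also have "\<dots> = (3*(t+b) - b)/(3*(t+b))" by (simp add: algebra_simps)
    also have "\<dots> = 3*(t+b)/(3*(t+b)) - b/(3*(t+b))" by (rule diff_divide_distrib)
    also have "3*(t+b)/(3*(t+b)) = 1" using tb by (intro divide_self) simp
    finally show ?thesis by simp
  qed
  show ?thesis
    unfolding UB_def Let_def h1 h2 h3 h4 Dt_def M_def
    using h5 h6 by (simp add: distrib_left algebra_simps t_def[symmetric])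
qed

lemma Dt_mono: assumes b: "0 < b" and t: "0 < t1" "t1 < t2"
  shows "0 < Dt b t1" "Dt b t1 < Dt b t2"
proof -
  have tb1: "0 < t1 + b" and tb2: "0 < t2 + b" using t b by auto
  have A1: "b/(3*(t1+b)) < 1" using tb1 t b by (simp add: divide_simps)
  have A2: "b/(3*(t2+b)) < b/(3*(t1+b))" using tb1 tb2 t b by (intro divide_strict_left_mono) auto
  have G1: "0 \<le> G b t1" using G_nonneg t b by simp
  have G12: "G b t1 \<le> G b t2" using G_mono[of t1 t2 b] t b by simp
  have M1: "0 \<le> M (sqrt (2 * G b t1))" unfolding M_def using cdf_nonneg phi_pos
    by (simp add: less_imp_le)
  have M12: "M (sqrt (2 * G b t1)) \<le> M (sqrt (2 * G b t2))"
    unfolding M_def using G1 G12 by (intro M_mono) auto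
  have R1: "0 \<le> b * sqrt(t1/(t1+b))" using t b by simp
  have rho: "t1/(t1+b) \<le> t2/(t2+b)"
  proof -
    have "t1*(t2+b) \<le> t2*(t1+b)" using t b by (simp add: algebra_simps)
    then show ?thesis using tb1 tb2 by (simp add: divide_simps)
  qed
  have R12: "b * sqrt(t1/(t1+b)) \<le> b * sqrt(t2/(t2+b))" using b rho by simp
  have P: "b * sqrt(t1/(t1+b)) * M (sqrt (2 * G b t1)) \<le> b * sqrt(t2/(t2+b)) * M (sqrt (2 * G b t2))"
    using R1 R12 M1 M12 by (intro mult_mono[OF R12 M12 _ M1]) linarith
  have P0: "0 \<le> b * sqrt(t1/(t1+b)) * M (sqrt (2 * G b t1))" using R1 M1 by simp
  show "0 < Dt b t1" unfolding Dt_def using A1 P0 by linarith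
  show "Dt b t1 < Dt b t2" unfolding Dt_def using A2 P by linarith
qed

theorem lemma1:
  fixes \<beta> :: real
  assumes "\<beta> > 0"
  shows "strict_antimono_on {0<..} (UB \<beta>)"
  unfolding monotone_on_def
proof (intro ballI impI)
  fix x y :: real assume x: "x \<in> {0<..}" and y: "y \<in> {0<..}" and xy: "x < y"
  have "0 < sqrt x" "sqrt x < sqrt y" using x xy by auto
  note D = Dt_mono[OF assms this]
  show "UB \<beta> y < UB \<beta> x"
    using UB_eq[OF assms, of x] UB_eq[OF assms, of y] x y D less_imp_inverse_less[OF D(2) D(1)] by simp
qed

end
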